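(* Let $N\ge 2$ and let $c_2,\dots,c_N>0$ be real numbers; set $c_1=1$ and let $\Lambda_{\mathbf c}=\mathbb{Z}\oplus c_2\mathbb{Z}\oplus\cdots\oplus c_N\mathbb{Z}\subset\mathbb{R}^N$. Let $\Lambda\subset\mathbb{R}^{N-1}$ be a full-rank lattice, and let $L^*=(l^*_{ij})_{1\le i,j\le N-1}$ be a lower triangular generator matrix (rows are basis vectors) of the dual lattice $\Lambda^*$. For $w\in\mathbb{N}$ let $L_w^*$ be the $(N-1)\times N$ real matrix with entries $$(L_w^* )_{ij}=\frac{\lfloor w\,c_j\,l^*_{ij}\rfloor}{c_j}\ \ (1\le j\le i),\qquad (L_w^* )_{i,i+1}=\frac{1}{c_{i+1}},\qquad (L_w^* )_{ij}=0\ \ (j\ge i+2),$$ for $i=1,\dots,N-1$, and let $\Lambda_w^*$ be the lattice generated by its rows. Then: (i) for each $w$ there exist integers $u_2,\dots,u_N$ such that, with $\hat{\mathbf u}=(1,u_2c_2,\dots,u_Nc_N)$, the lattice $\Lambda_w^*$ equals the dual lattice $\big(P_{\hat{\mathbf u}^\perp}(\Lambda_{\mathbf c})\big)^*$ of the orthogonal projection of $\Lambda_{\mathbf c}$ onto the hyperplane $\hat{\mathbf u}^\perp$; equivalently, $\Lambda_w^*$ is also generated by the rows of the matrix whose $(i-1)$-th row is $-u_i\mathbf e_1+\frac{1}{c_i}\mathbf e_i$, $i=2,\dots,N$ (with $\mathbf e_k$ the standard basis of $\mathbb{R}^N$); (ii) $\frac{1}{w^2}L_w^*(L_w^* )^t\to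 L^*(L^* )^t$ as $w\to\infty$.
   Context: For a lattice $\Gamma\subset\mathbb{R}^N$, its dual is $\Gamma^*=\{\mathbf x\in\operatorname{span}(\Gamma):\langle\mathbf x,\mathbf y\rangle\in\mathbb{Z}\ \forall\mathbf y\in\Gamma\}$, where $\operatorname{span}(\Gamma)$ is the real subspace spanned by $\Gamma$. For a nonzero vector $\hat{\mathbf u}\in\mathbb{R}^N$, $P_{\hat{\mathbf u}^\perp}(\mathbf n)=\mathbf n\big(I_N-\frac{\hat{\mathbf u}^t\hat{\mathbf u}}{\hat{\mathbf u}\hat{\mathbf u}^t}\big)$ (row vectors) is the orthogonal projection onto the hyperplane orthogonal to $\hat{\mathbf u}$; $P_{\hat{\mathbf u}^\perp}(\Lambda_{\mathbf c})$ denotes the image of $\Lambda_{\mathbf c}$ under this projection (a lattice in $\hat{\mathbf u}^\perp$ for $\hat{\mathbf u}$ of the given form). $\lfloor\cdot\rfloor$ is the floor function. *)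

theory Defs
  imports Complex_Main
begin

text \<open>Vectors in R^n are modelled as functions nat => real, with components
  indexed by 1..n and (for all vectors we construct) zero outside 1..n.\<close>

definition ip :: "nat \<Rightarrow> (nat \<Rightarrow> real) \<Rightarrow> (nat \<Rightarrow> real) \<Rightarrow> real" where
  "ip n x y = (\<Sum>k=1..n. x k * y k)"

definition gen_lattice :: "nat \<Rightarrow> nat \<Rightarrow> (nat \<Rightarrow> nat \<Rightarrow> real) \<Rightarrow> (nat \<Rightarrow> real) set" where
  "gen_lattice n m v = {x. \<exists>a::nat \<Rightarrow> int.
      x = (\<lambda>k. if k \<in> {1..n} then (\<Sum>i=1..m. of_int (a i) * v i k) else 0)}"

definition lin_indep :: "nat \<Rightarrow> nat \<Rightarrow> (nat \<Rightarrow> nat \<Rightarrow> real) \<Rightarrow> bool" where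
  "lin_indep n m v \<longleftrightarrow> (\<forall>a::nat \<Rightarrow> real.
      (\<forall>k\<in>{1..n}. (\<Sum>i=1..m. a i * v i k) = 0) \<longrightarrow> (\<forall>i\<in>{1..m}. a i = 0))"

definition rspan :: "(nat \<Rightarrow> real) set \<Rightarrow> (nat \<Rightarrow> real) set" where
  "rspan G = {x. \<exists>S f. finite S \<and> S \<subseteq> G \<and> x = (\<lambda>k. \<Sum>y\<in>S. f y * y k)}"

definition dual :: "nat \<Rightarrow> (nat \<Rightarrow> real) set \<Rightarrow> (nat \<Rightarrow> real) set" where
  "dual n G = {x \<in> rspan G. \<forall>y\<in>G. ip n x y \<in> \<int>}"

definition proj_perp :: "nat \<Rightarrow> (nat \<Rightarrow> real) \<Rightarrow> (nat \<Rightarrow> real) \<Rightarrow> (nat \<Rightarrow> real)" where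
  "proj_perp n u x = (\<lambda>k. x k - (ip n x u / ip n u u) * u k)"

definition Lambda_c :: "nat \<Rightarrow> (nat \<Rightarrow> real) \<Rightarrow> (nat \<Rightarrow> real) set" where
  "Lambda_c N c = gen_lattice N N (\<lambda>i k. if k = i then c i else 0)"

definition Lw :: "(nat \<Rightarrow> real) \<Rightarrow> (nat \<Rightarrow> nat \<Rightarrow> real) \<Rightarrow> nat \<Rightarrow> nat \<Rightarrow> nat \<Rightarrow> real" where
  "Lw c l w i j =
     (if j \<le> i then of_int \<lfloor>real w * c j * l i j\<rfloor> / c j
      else if j = i + 1 then 1 / c (i + 1) else 0)"

definition uhat :: "nat \<Rightarrow> (nat \<Rightarrow> real) \<Rightarrow> (nat \<Rightarrow> int) \<Rightarrow> (nat \<Rightarrow> real)" where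
  "uhat N c u = (\<lambda>k. if k = 1 then 1 else if k \<in> {2..N} then of_int (u k) * c k else 0)"

end

theory Submission
  imports Defs
begin


definition restr :: "nat \<Rightarrow> (nat \<Rightarrow> real) \<Rightarrow> (nat \<Rightarrow> real)" where
  "restr n f = (\<lambda>k. if k \<in> {1..n} then f k else 0)"

lemma gl_zero: "(\<lambda>_. 0) \<in> gen_lattice n m v"
  unfolding gen_lattice_def by (rule CollectI, rule exI[of _ "\<lambda>_. 0"]) auto

lemma gl_add:
  assumes "x \<in> gen_lattice n m v" "y \<in> gen_lattice n m v"
  shows "(\<lambda>k. x k + y k) \<in> gen_lattice n m v"
proof -
  obtain a where a: "x = (\<lambda>k. if k \<in> {1..n} then (\<Sum>i=1..m. of_int (a i) * v i k) else 0)"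
    using assms(1) unfolding gen_lattice_def by blast
  obtain b where b: "y = (\<lambda>k. if k \<in> {1..n} then (\<Sum>i=1..m. of_int (b i) * v i k) else 0)"
    using assms(2) unfolding gen_lattice_def by blast
  show ?thesis unfolding gen_lattice_def
    by (rule CollectI, rule exI[of _ "\<lambda>i. a i + b i"]) (auto simp: a b algebra_simps sum.distrib)
qed

lemma gl_smult:
  assumes "x \<in> gen_lattice n m v"
  shows "(\<lambda>k. of_int z * x k) \<in> gen_lattice n m v"
proof -
  obtain a where a: "x = (\<lambda>k. if k \<in> {1..n} then (\<Sum>i=1..m. of_int (a i) * v i k) else 0)"
    using assms(1) unfolding gen_lattice_def by blast
  show ?thesis unfolding gen_lattice_def
    by (rule CollectI, rule exI[of _ "\<lambda>i. z * a i"]) (auto simp: a algebra_simps sum_distrib_left)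
qed

lemma gl_gen: "i \<in> {1..m} \<Longrightarrow> restr n (v i) \<in> gen_lattice n m v"
  unfolding gen_lattice_def restr_def
proof -
  assume i: "i \<in> {1..m}"
  have eq: "\<And>k. (\<Sum>j=1..m. of_int (if j = i then 1 else 0) * v j k) = v i k"
  proof -
    fix k
    have "(\<Sum>j=1..m. of_int (if j = i then 1 else 0) * v j k) = (\<Sum>j=1..m. if j = i then v j k else 0)"
      by (rule sum.cong) auto
    also have "\<dots> = v i k" using i by (simp add: sum.delta)
    finally show "(\<Sum>j=1..m. of_int (if j = i then 1 else 0) * v j k) = v i k" .
  qed
  then show "(\<lambda>k. if k \<in> {1..n} then v i k else 0) \<in> {x. \<exists>a::nat \<Rightarrow> int.
      x = (\<lambda>k. if k \<in> {1..n} then (\<Sum>i=1..m. of_int (a i) * v i k) else 0)}"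
    by (intro CollectI exI[of _ "\<lambda>j. if j = i then 1 else 0"] ext) (simp only: eq)
qed

lemma gl_sum:
  assumes "finite A" "\<forall>i\<in>A. g i \<in> gen_lattice n m v"
  shows "(\<lambda>k. \<Sum>i\<in>A. g i k) \<in> gen_lattice n m v"
  using assms
proof (induction A rule: finite_induct)
  case empty then show ?case using gl_zero by simp
next
  case (insert x F)
  then show ?case using gl_add[of "g x" n m v "\<lambda>k. \<Sum>i\<in>F. g i k"] by simp
qed

lemma gl_mono:
  assumes "\<forall>i\<in>{1..m'}. restr n (v' i) \<in> gen_lattice n m v"
  shows "gen_lattice n m' v' \<subseteq> gen_lattice n m v"
proof
  fix x assume "x \<in> gen_lattice n m' v'"
  then obtain a where a: "x = (\<lambda>k. if k \<in> {1..n} then (\<Sum>i=1..m'. of_int (a i) * v' i k) else 0)"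
    unfolding gen_lattice_def by blast
  have "x = (\<lambda>k. \<Sum>i\<in>{1..m'}. of_int (a i) * restr n (v' i) k)"
    by (rule ext) (auto simp: a restr_def)
  also have "\<dots> \<in> gen_lattice n m v"
    by (rule gl_sum) (use assms gl_smult in auto)
  finally show "x \<in> gen_lattice n m v" .
qed

lemma rspan_sum:
  assumes "finite A" "g ` A \<subseteq> G"
  shows "(\<lambda>j. \<Sum>k\<in>A. a k * g k j) \<in> rspan G"
proof -
  have "(\<lambda>j. \<Sum>k\<in>A. a k * g k j) = (\<lambda>j. \<Sum>y\<in>g ` A. (\<Sum>k\<in>{k\<in>A. g k = y}. a k) * y j)"
  proof
    fix j
    have "(\<Sum>k\<in>A. a k * g k j) = (\<Sum>y\<in>g ` A. \<Sum>k\<in>{k\<in>A. g k = y}. a k * g k j)"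
      by (rule sum.image_gen[OF assms(1)])
    also have "\<dots> = (\<Sum>y\<in>g ` A. (\<Sum>k\<in>{k\<in>A. g k = y}. a k) * y j)"
      by (rule sum.cong) (auto simp: sum_distrib_right)
    finally show "(\<Sum>k\<in>A. a k * g k j) = (\<Sum>y\<in>g ` A. (\<Sum>k\<in>{k\<in>A. g k = y}. a k) * y j)" .
  qed
  note eq = this
  show ?thesis unfolding rspan_def
    apply (rule CollectI)
    apply (rule exI[of _ "g ` A"])
    apply (rule exI[of _ "\<lambda>y. \<Sum>k\<in>{k\<in>A. g k = y}. a k"])
    by (intro conjI finite_imageI assms(1) assms(2) eq)
qed

lemma ip_sum_left:
  assumes "finite S"
  shows "ip n (\<lambda>k. \<Sum>y\<in>S. f y * y k) v = (\<Sum>y\<in>S. f y * ip n y v)"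
  unfolding ip_def sum_distrib_left sum_distrib_right by (subst sum.swap) (simp add: mult.assoc)

lemma sum_split1:
  assumes "(N::nat) \<ge> 1"
  shows "(\<Sum>k=1..N. f k) = f 1 + (\<Sum>i=1..N-1. f (i+1))"
proof -
  have "{1..N} = insert 1 {Suc 1..Suc (N-1)}" using assms by auto
  then have "(\<Sum>k=1..N. f k) = f 1 + (\<Sum>k=Suc 1..Suc (N-1). f k)" by simp
  also have "(\<Sum>k=Suc 1..Suc (N-1). f k) = (\<Sum>i=1..N-1. f (i+1))"
    by (subst sum.shift_bounds_cl_Suc_ivl) simp
  finally show ?thesis .
qed

primrec Ufun :: "(nat \<Rightarrow> nat \<Rightarrow> int) \<Rightarrow> nat \<Rightarrow> nat \<Rightarrow> int" where
  "Ufun m 0 = (\<lambda>_. 0)"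
| "Ufun m (Suc i) = (Ufun m i)(Suc i := - (m i 1 + (\<Sum>j=2..i. m i j * Ufun m i j)))"

lemma Ufun_stable: "j \<le> i \<Longrightarrow> Ufun m i j = Ufun m j j"
  by (induction i) (auto simp: le_Suc_eq)

definition uu :: "(nat \<Rightarrow> nat \<Rightarrow> int) \<Rightarrow> nat \<Rightarrow> int" where
  "uu m k = Ufun m k k"

lemma uu_rec: "uu m (i+1) = - (m i 1 + (\<Sum>j=2..i. m i j * uu m j))"
proof -
  have "(\<Sum>j=2..i. m i j * Ufun m i j) = (\<Sum>j=2..i. m i j * uu m j)"
  proof (rule sum.cong)
    fix j assume "j \<in> {2..i}"
    then have "Ufun m i j = Ufun m j j" by (intro Ufun_stable) auto
    then show "m i j * Ufun m i j = m i j * uu m j" by (simp add: uu_def)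
  qed simp
  then show ?thesis by (simp add: uu_def)
qed

definition mm :: "(nat \<Rightarrow> real) \<Rightarrow> (nat \<Rightarrow> nat \<Rightarrow> real) \<Rightarrow> nat \<Rightarrow> nat \<Rightarrow> nat \<Rightarrow> int" where
  "mm c l w i j = \<lfloor>real w * c j * l i j\<rfloor>"

definition Rr :: "(nat \<Rightarrow> int) \<Rightarrow> (nat \<Rightarrow> real) \<Rightarrow> nat \<Rightarrow> nat \<Rightarrow> real" where
  "Rr u c = (\<lambda>i k. (if k = 1 then - of_int (u (i + 1)) else 0)
                  + (if k = i + 1 then 1 / c (i + 1) else 0))"

lemma row_id:
  assumes c1: "c 1 = 1" and i: "i \<ge> 1" and k: "k \<ge> 1"
    and u: "u (i+1) = - (mm c l w i 1 + (\<Sum>j=2..i. mm c l w i j * u j))"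
  shows "Lw c l w i k = Rr u c i k + (\<Sum>j\<in>{2..i}. of_int (mm c l w i j) * Rr u c (j-1) k)"
proof (cases "k = 1")
  case True
  have "(\<Sum>j\<in>{2..i}. of_int (mm c l w i j) * Rr u c (j-1) k) = (\<Sum>j\<in>{2..i}. - (of_int (mm c l w i j) * of_int (u j)))"
  proof (rule sum.cong)
    fix j assume "j \<in> {2..i}"
    then have "j - 1 + 1 = j" "j \<noteq> 1" by auto
    then show "of_int (mm c l w i j) * Rr u c (j-1) k = - (of_int (mm c l w i j) * of_int (u j))"
      unfolding Rr_def True by simp
  qed simp
  also have "\<dots> = - of_int (\<Sum>j\<in>{2..i}. mm c l w i j * u j)"
    by (simp only: sum_negf of_int_sum of_int_mult)
  finally have s: "(\<Sum>j\<in>{2..i}. of_int (mm c l w i j) * Rr u c (j-1) k) = - of_int (\<Sum>j\<in>{2..i}. mm c l w i j * u j)" .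
  have "Lw c l w i k = of_int (mm c l w i 1)" using True i c1 by (simp add: Lw_def mm_def)
  moreover have "Rr u c i k = - of_int (u (i+1))" using True i by (simp add: Rr_def)
  ultimately show ?thesis using s u by simp
next
  case False
  then have k2: "k \<ge> 2" using k by simp
  have "(\<Sum>j\<in>{2..i}. of_int (mm c l w i j) * Rr u c (j-1) k) = (\<Sum>j\<in>{2..i}. if k = j then of_int (mm c l w i k) / c k else 0)"
  proof (rule sum.cong)
    fix j assume "j \<in> {2..i}"
    then have "j - 1 + 1 = j" "j \<noteq> 1" by auto
    then show "of_int (mm c l w i j) * Rr u c (j-1) k = (if k = j then of_int (mm c l w i k) / c k else 0)"
      unfolding Rr_def using False by auto
  qed simp
  also have "\<dots> = (if k \<in> {2..i} then of_int (mm c l w i k) / c k else 0)"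
    by (simp add: sum.delta)
  finally have s: "(\<Sum>j\<in>{2..i}. of_int (mm c l w i j) * Rr u c (j-1) k) = (if k \<in> {2..i} then of_int (mm c l w i k) / c k else 0)" .
  show ?thesis using s k2 False by (auto simp: Lw_def Rr_def mm_def)
qed

lemma latA:
  assumes N2: "N \<ge> 2" and c1: "c 1 = 1"
    and urec: "\<forall>i\<in>{1..N-1}. u (i+1) = - (mm c l w i 1 + (\<Sum>j=2..i. mm c l w i j * u j))"
  shows "gen_lattice N (N-1) (Lw c l w) = gen_lattice N (N-1) (Rr u c)"
proof -
  let ?G = "gen_lattice N (N-1) (Rr u c)"
  let ?H = "gen_lattice N (N-1) (Lw c l w)"
  have decomp: "restr N (Lw c l w i) = (\<lambda>k. restr N (Rr u c i) k + (\<Sum>j\<in>{2..i}. of_int (mm c l w i j) * restr N (Rr u c (j-1)) k))"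
    if i: "i \<in> {1..N-1}" for i
  proof
    fix k
    show "restr N (Lw c l w i) k = restr N (Rr u c i) k + (\<Sum>j\<in>{2..i}. of_int (mm c l w i j) * restr N (Rr u c (j-1)) k)"
    proof (cases "k \<in> {1..N}")
      case True
      then show ?thesis using row_id[of c i k u l w] c1 i urec by (simp add: restr_def)
    next
      case False
      then have "\<And>f. restr N f k = 0" unfolding restr_def by auto
      then show ?thesis by simp
    qed
  qed
  have A1: "\<forall>i\<in>{1..N-1}. restr N (Lw c l w i) \<in> ?G"
  proof
    fix i assume i: "i \<in> {1..N-1}"
    have "(\<lambda>k. \<Sum>j\<in>{2..i}. of_int (mm c l w i j) * restr N (Rr u c (j-1)) k) \<in> ?G"
      by (rule gl_sum) (use i in \<open>auto intro!: gl_smult gl_gen\<close>)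
    then have "(\<lambda>k. restr N (Rr u c i) k + (\<Sum>j\<in>{2..i}. of_int (mm c l w i j) * restr N (Rr u c (j-1)) k)) \<in> ?G"
      by (intro gl_add gl_gen i)
    then show "restr N (Lw c l w i) \<in> ?G" using decomp[OF i] by simp
  qed
  have A2: "i \<in> {1..N-1} \<longrightarrow> restr N (Rr u c i) \<in> ?H" for i
  proof (induction i rule: less_induct)
    case (less i)
    show ?case
    proof
      assume i: "i \<in> {1..N-1}"
      have "(\<lambda>k. \<Sum>j\<in>{2..i}. of_int (- mm c l w i j) * restr N (Rr u c (j-1)) k) \<in> ?H"
      proof (rule gl_sum)
        show "\<forall>j\<in>{2..i}. (\<lambda>k. of_int (- mm c l w i j) * restr N (Rr u c (j-1)) k) \<in> ?H"
        proof
          fix j assume j: "j \<in> {2..i}"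
          then have "j - 1 < i" "j - 1 \<in> {1..N-1}" using i by auto
          then have "restr N (Rr u c (j-1)) \<in> ?H" using less by blast
          then show "(\<lambda>k. of_int (- mm c l w i j) * restr N (Rr u c (j-1)) k) \<in> ?H" by (rule gl_smult)
        qed
      qed simp
      then have "(\<lambda>k. restr N (Lw c l w i) k + (\<Sum>j\<in>{2..i}. of_int (- mm c l w i j) * restr N (Rr u c (j-1)) k)) \<in> ?H"
        by (intro gl_add gl_gen i)
      moreover have "(\<lambda>k. restr N (Lw c l w i) k + (\<Sum>j\<in>{2..i}. of_int (- mm c l w i j) * restr N (Rr u c (j-1)) k)) = restr N (Rr u c i)"
        using decomp[OF i] by (simp add: sum_negf)
      ultimately show "restr N (Rr u c i) \<in> ?H" by simp
    qed
  qed
  have "\<forall>i\<in>{1..N-1}. restr N (Rr u c i) \<in> ?H" using A2 by blast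
  then have s1: "?G \<subseteq> ?H" by (rule gl_mono)
  have s2: "?H \<subseteq> ?G" using A1 by (rule gl_mono)
  show ?thesis using s1 s2 by (rule subset_antisym[rotated])
qed

definition Sset :: "nat \<Rightarrow> (nat \<Rightarrow> real) \<Rightarrow> (nat \<Rightarrow> int) \<Rightarrow> (nat \<Rightarrow> real) set" where
  "Sset N c u = {x. (\<forall>k. k \<notin> {1..N} \<longrightarrow> x k = 0) \<and> (\<forall>i\<in>{1..N-1}. x (i+1) * c (i+1) \<in> \<int>)
     \<and> x 1 + (\<Sum>i=1..N-1. x (i+1) * c (i+1) * of_int (u (i+1))) = 0}"

lemma rowsum1: "(\<Sum>i=1..M. of_int (a i) * Rr u c i 1) = - (\<Sum>i=1..M. of_int (a i) * of_int (u (i+1)))"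
  by (simp add: Rr_def sum_negf)

lemma rowsum2:
  assumes "j \<in> {1..M}"
  shows "(\<Sum>i=1..M. of_int (a i) * Rr u c i (j+1)) = of_int (a j) / c (j+1)"
proof -
  have "(\<Sum>i=1..M. of_int (a i) * Rr u c i (j+1)) = (\<Sum>i=1..M. if i = j then of_int (a j) / c (j+1) else 0)"
    by (rule sum.cong) (use assms in \<open>auto simp: Rr_def\<close>)
  also have "\<dots> = of_int (a j) / c (j+1)" using assms by (simp add: sum.delta')
  finally show ?thesis .
qed

lemma latB1:
  assumes N2: "N \<ge> 2" and c_pos: "\<forall>j\<in>{2..N}. c j > 0"
  shows "gen_lattice N (N-1) (Rr u c) = Sset N c u"
proof
  show "gen_lattice N (N-1) (Rr u c) \<subseteq> Sset N c u"
  proof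
    fix x assume "x \<in> gen_lattice N (N-1) (Rr u c)"
    then obtain a where a: "x = (\<lambda>k. if k \<in> {1..N} then (\<Sum>i=1..N-1. of_int (a i) * Rr u c i k) else 0)"
      unfolding gen_lattice_def by blast
    have x1: "x 1 = - (\<Sum>i=1..N-1. of_int (a i) * of_int (u (i+1)))"
      using N2 by (simp add: a Rr_def sum_negf)
    have xj: "x (j+1) * c (j+1) = of_int (a j)" if j: "j \<in> {1..N-1}" for j
    proof -
      have "c (j+1) > 0" using c_pos j by auto
      moreover have "j + 1 \<in> {1..N}" using j N2 by auto
      then have "x (j+1) = of_int (a j) / c (j+1)" using rowsum2[OF j, of a u c] by (simp add: a)
      ultimately show ?thesis by simp
    qed
    have "(\<Sum>i=1..N-1. x (i+1) * c (i+1) * of_int (u (i+1))) = (\<Sum>i=1..N-1. of_int (a i) * of_int (u (i+1)))"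
    proof (rule sum.cong)
      fix i assume "i \<in> {1..N-1}"
      then show "x (i+1) * c (i+1) * of_int (u (i+1)) = of_int (a i) * of_int (u (i+1))" using xj[of i] by simp
    qed simp
    moreover have "\<forall>k. k \<notin> {1..N} \<longrightarrow> x k = 0" by (simp add: a)
    moreover have "\<forall>i\<in>{1..N-1}. x (i+1) * c (i+1) \<in> \<int>" using xj by simp
    ultimately show "x \<in> Sset N c u" unfolding Sset_def using x1 by (simp add: sum_negf)
  qed
next
  show "Sset N c u \<subseteq> gen_lattice N (N-1) (Rr u c)"
  proof
    fix x assume x: "x \<in> Sset N c u"
    define a where "a j = \<lfloor>x (j+1) * c (j+1)\<rfloor>" for j
    have aj: "of_int (a j) = x (j+1) * c (j+1)" if "j \<in> {1..N-1}" for j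
      using x that unfolding Sset_def a_def by (auto intro: of_int_floor)
    have "x = (\<lambda>k. if k \<in> {1..N} then (\<Sum>i=1..N-1. of_int (a i) * Rr u c i k) else 0)"
    proof
      fix k
      show "x k = (if k \<in> {1..N} then (\<Sum>i=1..N-1. of_int (a i) * Rr u c i k) else 0)"
      proof (cases "k \<in> {1..N}")
        case False then show ?thesis using x unfolding Sset_def by auto
      next
        case True
        show ?thesis
        proof (cases "k = 1")
          case k1: True
          have "(\<Sum>i=1..N-1. of_int (a i) * of_int (u (i+1))) = (\<Sum>i=1..N-1. x (i+1) * c (i+1) * of_int (u (i+1)))"
          proof (rule sum.cong)
            fix i assume "i \<in> {1..N-1}"
            then show "of_int (a i) * of_int (u (i+1)) = x (i+1) * c (i+1) * of_int (u (i+1))" using aj[of i] by simp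
          qed simp
          moreover have r: "(\<Sum>i=1..N-1. of_int (a i) * Rr u c i k) = - (\<Sum>i=1..N-1. of_int (a i) * of_int (u (i+1)))"
            using k1 by (simp add: Rr_def sum_negf)
          moreover have "x 1 = - (\<Sum>i=1..N-1. x (i+1) * c (i+1) * of_int (u (i+1)))"
            using x unfolding Sset_def by simp
          ultimately show ?thesis using k1 True by simp
        next
          case False
          define j where "j = k - 1"
          have j: "k = j + 1" "j \<in> {1..N-1}" using True False unfolding j_def by auto
          have "c (j+1) > 0" using c_pos j by auto
          then show ?thesis using rowsum2[OF j(2), of a u c] aj[OF j(2)] True j(1) by simp
        qed
      qed
    qed
    then show "x \<in> gen_lattice N (N-1) (Rr u c)" unfolding gen_lattice_def by (intro CollectI exI)
  qed
qed

lemma ip_uhat: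
  assumes N2: "N \<ge> 2"
  shows "ip N x (uhat N c u) = x 1 + (\<Sum>i=1..N-1. x (i+1) * c (i+1) * of_int (u (i+1)))"
proof -
  have "ip N x (uhat N c u) = x 1 * uhat N c u 1 + (\<Sum>i=1..N-1. x (i+1) * uhat N c u (i+1))"
    unfolding ip_def using N2 by (intro sum_split1) simp
  also have "(\<Sum>i=1..N-1. x (i+1) * uhat N c u (i+1)) = (\<Sum>i=1..N-1. x (i+1) * c (i+1) * of_int (u (i+1)))"
  proof (rule sum.cong)
    fix i assume "i \<in> {1..N-1}"
    then have "i + 1 \<in> {2..N}" "i + 1 \<noteq> 1" using N2 by auto
    then show "x (i+1) * uhat N c u (i+1) = x (i+1) * c (i+1) * of_int (u (i+1))"
      unfolding uhat_def by simp
  qed simp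
  finally show ?thesis by (simp add: uhat_def)
qed

lemma uhat_pos:
  assumes N2: "N \<ge> 2"
  shows "ip N (uhat N c u) (uhat N c u) > 0"
proof -
  have "ip N (uhat N c u) (uhat N c u) = uhat N c u 1 * uhat N c u 1 + (\<Sum>i=1..N-1. uhat N c u (i+1) * uhat N c u (i+1))"
    unfolding ip_def using N2 by (intro sum_split1) simp
  moreover have "(\<Sum>i=1..N-1. uhat N c u (i+1) * uhat N c u (i+1)) \<ge> 0"
    by (intro sum_nonneg) simp
  ultimately show ?thesis by (simp add: uhat_def)
qed

lemma uhat_out: "N \<ge> 1 \<Longrightarrow> k \<notin> {1..N} \<Longrightarrow> uhat N c u k = 0"
  unfolding uhat_def by auto

lemma Lc_elem:
  assumes "z \<in> Lambda_c N c"
  shows "\<exists>b::nat \<Rightarrow> int. z = (\<lambda>k. if k \<in> {1..N} then of_int (b k) * c k else 0)"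
proof -
  obtain b where b: "z = (\<lambda>k. if k \<in> {1..N} then (\<Sum>i=1..N. of_int (b i) * (if k = i then c i else 0)) else 0)"
    using assms unfolding Lambda_c_def gen_lattice_def by blast
  have "(\<Sum>i=1..N. of_int (b i) * (if k = i then c i else 0)) = (if k \<in> {1..N} then of_int (b k) * c k else 0)" for k
  proof -
    have "(\<Sum>i=1..N. of_int (b i) * (if k = i then c i else 0)) = (\<Sum>i=1..N. if i = k then of_int (b k) * c k else 0)"
      by (rule sum.cong) auto
    then show ?thesis by (simp add: sum.delta')
  qed
  then have "z = (\<lambda>k. if k \<in> {1..N} then of_int (b k) * c k else 0)"
    unfolding b by (intro ext) simp
  then show ?thesis by (intro exI)
qed

definition Ek :: "nat \<Rightarrow> (nat \<Rightarrow> real) \<Rightarrow> nat \<Rightarrow> (nat \<Rightarrow> real)" where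
  "Ek N c k = (\<lambda>j. if j \<in> {1..N} then of_int (if j = k then 1 else 0) * c j else 0)"

lemma Ek_in: "k \<in> {1..N} \<Longrightarrow> Ek N c k \<in> Lambda_c N c"
proof -
  assume k: "k \<in> {1..N}"
  have "(\<Sum>i=1..N. of_int (if i = k then 1 else 0) * (if j = i then c i else 0)) = of_int (if j = k then 1 else 0) * c j" for j
  proof -
    have "(\<Sum>i=1..N. of_int (if i = k then 1 else 0) * (if j = i then c i else 0)) = (\<Sum>i=1..N. if i = k then (if j = k then c k else 0) else 0)"
      by (rule sum.cong) auto
    then show ?thesis using k by (simp add: sum.delta')
  qed
  then have "Ek N c k = (\<lambda>j. if j \<in> {1..N} then (\<Sum>i=1..N. of_int (if i = k then 1 else 0) * (if j = i then c i else 0)) else 0)"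
    unfolding Ek_def by (intro ext) simp
  then show ?thesis unfolding Lambda_c_def gen_lattice_def by (intro CollectI exI)
qed

lemma ip_Ek: "k \<in> {1..N} \<Longrightarrow> ip N x (Ek N c k) = x k * c k"
proof -
  assume k: "k \<in> {1..N}"
  have "ip N x (Ek N c k) = (\<Sum>j=1..N. if j = k then x k * c k else 0)"
    unfolding ip_def Ek_def by (rule sum.cong) auto
  then show ?thesis using k by (simp add: sum.delta')
qed

lemma ip_Ek_left: "k \<in> {1..N} \<Longrightarrow> ip N (Ek N c k) x = c k * x k"
proof -
  assume k: "k \<in> {1..N}"
  have "ip N (Ek N c k) x = (\<Sum>j=1..N. if j = k then c k * x k else 0)"
    unfolding ip_def Ek_def by (rule sum.cong) auto
  then show ?thesis using k by (simp add: sum.delta')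
qed

lemma ip_lin_r: "ip n x (\<lambda>k. z k - t * v k) = ip n x z - t * ip n x v"
  unfolding ip_def by (simp add: right_diff_distrib sum_subtractf sum_distrib_left mult.left_commute)

lemma ip_lin_l: "ip n (\<lambda>k. z k - t * v k) x = ip n z x - t * ip n v x"
  unfolding ip_def by (simp add: left_diff_distrib sum_subtractf sum_distrib_left mult.assoc)

lemma ip_proj: "ip n x (proj_perp n v z) = ip n x z - (ip n z v / ip n v v) * ip n x v"
  unfolding proj_perp_def by (rule ip_lin_r)

lemma ip_proj_self: "ip n v v \<noteq> 0 \<Longrightarrow> ip n (proj_perp n v z) v = 0"
  unfolding proj_perp_def by (subst ip_lin_l[of n z "ip n z v / ip n v v" v v]) simp

lemma proj_out:
  assumes N2: "N \<ge> 2" and y: "y \<in> proj_perp N (uhat N c u) ` Lambda_c N c" and k: "k \<notin> {1..N}"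
  shows "y k = 0"
proof -
  obtain z where z: "z \<in> Lambda_c N c" "y = proj_perp N (uhat N c u) z" using y by blast
  obtain b where b: "z = (\<lambda>k. if k \<in> {1..N} then of_int (b k) * c k else 0)" using Lc_elem[OF z(1)] by blast
  have "z k = 0" using k unfolding b by auto
  moreover have "uhat N c u k = 0" using k N2 by (intro uhat_out) auto
  ultimately show ?thesis by (simp add: z(2) proj_perp_def)
qed

lemma latB2:
  assumes N2: "N \<ge> 2" and c_pos: "\<forall>j\<in>{2..N}. c j > 0" and c1: "c 1 = 1"
  shows "Sset N c u = dual N (proj_perp N (uhat N c u) ` Lambda_c N c)"
proof
  let ?U = "uhat N c u"
  let ?P = "proj_perp N ?U"
  let ?G = "?P ` Lambda_c N c"
  have dpos: "ip N ?U ?U > 0" using uhat_pos[OF N2] .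
  have cnz: "c k \<noteq> 0" if "k \<in> {1..N}" for k
  proof (cases "k = 1")
    case False
    then have "k \<in> {2..N}" using that by auto
    then show ?thesis using c_pos by force
  qed (use c1 in simp)
  show "Sset N c u \<subseteq> dual N ?G"
  proof
    fix x assume x: "x \<in> Sset N c u"
    have xout: "\<And>k. k \<notin> {1..N} \<Longrightarrow> x k = 0" using x unfolding Sset_def by auto
    have xint: "\<And>i. i \<in> {1..N-1} \<Longrightarrow> x (i+1) * c (i+1) \<in> \<int>" using x unfolding Sset_def by auto
    have x1: "x 1 = - (\<Sum>i=1..N-1. x (i+1) * c (i+1) * of_int (u (i+1)))" using x unfolding Sset_def by simp
    have xU: "ip N x ?U = 0" using x ip_uhat[OF N2, of x c u] unfolding Sset_def by simp
    have eqx: "x = (\<lambda>j. \<Sum>k\<in>{1..N}. (x k / c k) * ?P (Ek N c k) j)"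
    proof
      fix j
      have t: "(x k / c k) * ?P (Ek N c k) j = (x k / c k) * Ek N c k j - (?U j / ip N ?U ?U) * (x k * ?U k)"
        if k: "k \<in> {1..N}" for k
      proof -
        have h: "?P (Ek N c k) j = Ek N c k j - (c k * ?U k / ip N ?U ?U) * ?U j"
          unfolding proj_perp_def using ip_Ek_left[OF k, of c ?U] by simp
        show ?thesis unfolding h using cnz[OF k] dpos by (simp add: field_simps)
      qed
      have "(\<Sum>k\<in>{1..N}. (x k / c k) * ?P (Ek N c k) j)
          = (\<Sum>k\<in>{1..N}. (x k / c k) * Ek N c k j - (?U j / ip N ?U ?U) * (x k * ?U k))"
        by (rule sum.cong) (simp_all only: t)
      also have "\<dots> = (\<Sum>k\<in>{1..N}. (x k / c k) * Ek N c k j) - (?U j / ip N ?U ?U) * (\<Sum>k\<in>{1..N}. x k * ?U k)"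
        by (simp only: sum_subtractf sum_distrib_left)
      also have "(\<Sum>k\<in>{1..N}. x k * ?U k) = 0" using xU unfolding ip_def by simp
      also have "(\<Sum>k\<in>{1..N}. (x k / c k) * Ek N c k j) = (\<Sum>k\<in>{1..N}. if k = j then x j else 0)"
      proof (rule sum.cong)
        fix k assume k: "k \<in> {1..N}"
        show "(x k / c k) * Ek N c k j = (if k = j then x j else 0)"
          using cnz[OF k] k unfolding Ek_def by auto
      qed simp
      also have "\<dots> = x j" using xout by (simp add: sum.delta')
      finally show "x j = (\<Sum>k\<in>{1..N}. (x k / c k) * ?P (Ek N c k) j)" by simp
    qed
    have "(\<lambda>j. \<Sum>k\<in>{1..N}. (x k / c k) * ?P (Ek N c k) j) \<in> rspan ?G"
    proof (rule rspan_sum)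
      show "(\<lambda>k. ?P (Ek N c k)) ` {1..N} \<subseteq> ?G"
      proof
        fix y assume "y \<in> (\<lambda>k. ?P (Ek N c k)) ` {1..N}"
        then obtain k where k: "k \<in> {1..N}" "y = ?P (Ek N c k)" by blast
        show "y \<in> ?G" using Ek_in[OF k(1), of c] k(2) by blast
      qed
    qed simp
    then have span: "x \<in> rspan ?G" using eqx by simp
    have x1int: "x 1 \<in> \<int>"
      unfolding x1 by (intro Ints_minus Ints_sum Ints_mult xint) auto
    have "ip N x y \<in> \<int>" if y: "y \<in> ?G" for y
    proof -
      obtain z where z: "z \<in> Lambda_c N c" "y = ?P z" using y by blast
      obtain b where b: "z = (\<lambda>k. if k \<in> {1..N} then of_int (b k) * c k else 0)" using Lc_elem[OF z(1)] by blast
      have "ip N x y = ip N x z" using z(2) ip_proj[of N x ?U z] xU by simp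
      also have "\<dots> = (\<Sum>k=1..N. x k * (of_int (b k) * c k))"
        unfolding ip_def b by (rule sum.cong) auto
      also have "\<dots> = x 1 * (of_int (b 1) * c 1) + (\<Sum>i=1..N-1. x (i+1) * (of_int (b (i+1)) * c (i+1)))"
        using N2 by (intro sum_split1) simp
      also have "\<dots> \<in> \<int>"
      proof (intro Ints_add Ints_sum)
        show "x 1 * (of_int (b 1) * c 1) \<in> \<int>" using x1int c1 by simp
        fix i assume "i \<in> {1..N-1}"
        then have "x (i+1) * c (i+1) * of_int (b (i+1)) \<in> \<int>" by (intro Ints_mult xint) auto
        then show "x (i+1) * (of_int (b (i+1)) * c (i+1)) \<in> \<int>" by (simp add: mult_ac)
      qed
      finally show ?thesis .
    qed
    then show "x \<in> dual N ?G" unfolding dual_def using span by blast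
  qed
next
  let ?U = "uhat N c u"
  let ?P = "proj_perp N ?U"
  let ?G = "?P ` Lambda_c N c"
  have dpos: "ip N ?U ?U > 0" using uhat_pos[OF N2] .
  show "dual N ?G \<subseteq> Sset N c u"
  proof
    fix x assume x: "x \<in> dual N ?G"
    then have span: "x \<in> rspan ?G" and xint: "\<forall>y\<in>?G. ip N x y \<in> \<int>" unfolding dual_def by auto
    obtain S f where S: "finite S" "S \<subseteq> ?G" "x = (\<lambda>k. \<Sum>y\<in>S. f y * y k)"
      using span unfolding rspan_def by blast
    have xout: "\<forall>k. k \<notin> {1..N} \<longrightarrow> x k = 0"
    proof (intro allI impI)
      fix k assume k: "k \<notin> {1..N}"
      have "\<forall>y\<in>S. y k = 0" using S(2) proj_out[OF N2 _ k] by blast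
      then show "x k = 0" unfolding S(3) by (intro sum.neutral) simp
    qed
    have xU: "ip N x ?U = 0"
    proof -
      have "ip N x ?U = (\<Sum>y\<in>S. f y * ip N y ?U)" unfolding S(3) by (rule ip_sum_left[OF S(1)])
      also have "\<dots> = 0"
      proof (rule sum.neutral, rule ballI)
        fix y assume "y \<in> S"
        then obtain z where "y = ?P z" using S(2) by blast
        then show "f y * ip N y ?U = 0" using ip_proj_self[of N ?U z] dpos by simp
      qed
      finally show ?thesis .
    qed
    have xi: "x (i+1) * c (i+1) \<in> \<int>" if i: "i \<in> {1..N-1}" for i
    proof -
      have k: "i + 1 \<in> {1..N}" using i N2 by auto
      have "?P (Ek N c (i+1)) \<in> ?G" using Ek_in[OF k] by blast
      then have "ip N x (?P (Ek N c (i+1))) \<in> \<int>" using xint by blast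
      moreover have "ip N x (?P (Ek N c (i+1))) = x (i+1) * c (i+1)"
        using ip_proj[of N x ?U "Ek N c (i+1)"] xU ip_Ek[OF k, of x c] by simp
      ultimately show ?thesis by simp
    qed
    show "x \<in> Sset N c u" unfolding Sset_def using xout xi xU ip_uhat[OF N2, of x c u] by simp
  qed
qed

lemma floor_lim: "(\<lambda>w::nat. of_int \<lfloor>real w * a\<rfloor> / real w) \<longlonglongrightarrow> a"
proof (rule tendsto_sandwich)
  show "\<forall>\<^sub>F w in sequentially. a - 1 / real w \<le> of_int \<lfloor>real w * a\<rfloor> / real w"
  proof (rule eventually_sequentiallyI[of 1])
    fix w :: nat assume "w \<ge> 1"
    then have wp: "real w > 0" by simp
    have "real w * a - 1 \<le> of_int \<lfloor>real w * a\<rfloor>" by linarith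
    then have "(real w * a - 1) / real w \<le> of_int \<lfloor>real w * a\<rfloor> / real w"
      using wp by (intro divide_right_mono) auto
    moreover have "(real w * a - 1) / real w = a - 1 / real w" using wp by (simp add: field_simps)
    ultimately show "a - 1 / real w \<le> of_int \<lfloor>real w * a\<rfloor> / real w" by simp
  qed
  show "\<forall>\<^sub>F w in sequentially. of_int \<lfloor>real w * a\<rfloor> / real w \<le> a"
  proof (rule eventually_sequentiallyI[of 1])
    fix w :: nat assume "w \<ge> 1"
    then have wp: "real w > 0" by simp
    have "of_int \<lfloor>real w * a\<rfloor> \<le> real w * a" by linarith
    then have "of_int \<lfloor>real w * a\<rfloor> / real w \<le> (real w * a) / real w"
      using wp by (intro divide_right_mono) auto
    then show "of_int \<lfloor>real w * a\<rfloor> / real w \<le> a" using wp by simp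
  qed
  have "(\<lambda>w::nat. a - 1 / real w) \<longlonglongrightarrow> a - 0"
    by (intro tendsto_diff tendsto_const lim_inverse_n')
  then show "(\<lambda>w::nat. a - 1 / real w) \<longlonglongrightarrow> a" by simp
qed (rule tendsto_const)

lemma const_over_w: "(\<lambda>w::nat. K / real w) \<longlonglongrightarrow> 0"
proof -
  have "(\<lambda>w::nat. K * (1 / real w)) \<longlonglongrightarrow> K * 0"
    by (intro tendsto_mult tendsto_const lim_inverse_n')
  then show ?thesis by simp
qed

lemma Lw_lim:
  assumes "c k \<noteq> 0"
  shows "(\<lambda>w. Lw c l w i k / real w) \<longlonglongrightarrow> (if k \<le> i then l i k else 0)"
proof (cases "k \<le> i")
  case True
  have "(\<lambda>w::nat. (of_int \<lfloor>real w * (c k * l i k)\<rfloor> / real w) / c k) \<longlonglongrightarrow> (c k * l i k) / c k"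
    by (intro tendsto_divide floor_lim tendsto_const assms)
  moreover have "(\<lambda>w::nat. (of_int \<lfloor>real w * (c k * l i k)\<rfloor> / real w) / c k) = (\<lambda>w. Lw c l w i k / real w)"
    using True by (auto simp: Lw_def mult.assoc)
  ultimately show ?thesis using True assms by simp
next
  case False
  have "(\<lambda>w. Lw c l w i k / real w) = (\<lambda>w. (if k = i + 1 then 1 / c (i + 1) else 0) / real w)"
    using False by (auto simp: Lw_def)
  then show ?thesis using False const_over_w by simp
qed

lemma partii:
  assumes N2: "N \<ge> 2" and c_pos: "\<forall>j\<in>{2..N}. c j > 0" and c1: "c 1 = 1"
    and L_lower: "\<forall>i\<in>{1..N-1}. \<forall>j\<in>{1..N-1}. i < j \<longrightarrow> l i j = 0"
    and i: "i \<in> {1..N-1}" and j: "j \<in> {1..N-1}"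
  shows "(\<lambda>w::nat. (1 / (real w)^2) * (\<Sum>k=1..N. Lw c l w i k * Lw c l w j k))
          \<longlonglongrightarrow> (\<Sum>k=1..N-1. l i k * l j k)"
proof -
  have cnz: "c k \<noteq> 0" if "k \<in> {1..N}" for k
  proof (cases "k = 1")
    case False
    then have "k \<in> {2..N}" using that by auto
    then show ?thesis using c_pos by force
  qed (use c1 in simp)
  have eq: "(\<lambda>w::nat. (1 / (real w)^2) * (\<Sum>k=1..N. Lw c l w i k * Lw c l w j k))
      = (\<lambda>w. \<Sum>k=1..N. (Lw c l w i k / real w) * (Lw c l w j k / real w))"
    by (rule ext) (simp add: sum_distrib_left power2_eq_square)
  have lim: "(\<lambda>w. \<Sum>k=1..N. (Lw c l w i k / real w) * (Lw c l w j k / real w))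
      \<longlonglongrightarrow> (\<Sum>k=1..N. (if k \<le> i then l i k else 0) * (if k \<le> j then l j k else 0))"
    by (intro tendsto_sum tendsto_mult Lw_lim cnz) auto
  have val: "(if k \<le> i' then l i' k else 0) = (if k \<le> N - 1 then l i' k else 0)" if "i' \<in> {1..N-1}" "k \<in> {1..N}" for i' k
    using that L_lower by auto
  have "(\<Sum>k=1..N. (if k \<le> i then l i k else 0) * (if k \<le> j then l j k else 0))
      = (\<Sum>k=1..N. (if k \<le> N - 1 then l i k else 0) * (if k \<le> N - 1 then l j k else 0))"
  proof (rule sum.cong)
    fix k assume k: "k \<in> {1..N}"
    show "(if k \<le> i then l i k else 0) * (if k \<le> j then l j k else 0)
      = (if k \<le> N - 1 then l i k else 0) * (if k \<le> N - 1 then l j k else 0)"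
      using val[OF i k] val[OF j k] by simp
  qed simp
  also have "\<dots> = (\<Sum>k=1..N-1. (if k \<le> N - 1 then l i k else 0) * (if k \<le> N - 1 then l j k else 0))"
  proof -
    obtain M where M: "N = Suc M" using N2 by (cases N) auto
    have "(\<Sum>k=1..Suc M. (if k \<le> M then l i k else 0) * (if k \<le> M then l j k else 0))
       = (\<Sum>k=1..M. (if k \<le> M then l i k else 0) * (if k \<le> M then l j k else 0))"
      by (simp add: sum.cl_ivl_Suc)
    then show ?thesis using M by simp
  qed
  also have "\<dots> = (\<Sum>k=1..N-1. l i k * l j k)" by (rule sum.cong) auto
  finally show ?thesis using eq lim by simp
qed

theorem theorem1:
  fixes N :: nat and c :: "nat \<Rightarrow> real"
    and B :: "nat \<Rightarrow> nat \<Rightarrow> real" and l :: "nat \<Rightarrow> nat \<Rightarrow> real"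
  assumes N2: "N \<ge> 2"
    and c_pos: "\<forall>j\<in>{2..N}. c j > 0"
    and c1: "c 1 = 1"
    and B_basis: "lin_indep (N - 1) (N - 1) B"
    and L_basis: "lin_indep (N - 1) (N - 1) l"
    and L_gen: "gen_lattice (N - 1) (N - 1) l = dual (N - 1) (gen_lattice (N - 1) (N - 1) B)"
    and L_lower: "\<forall>i\<in>{1..N-1}. \<forall>j\<in>{1..N-1}. i < j \<longrightarrow> l i j = 0"
  shows
    "(\<forall>w::nat. \<exists>u::nat \<Rightarrow> int.
        gen_lattice N (N - 1) (Lw c l w) =
          dual N (proj_perp N (uhat N c u) ` Lambda_c N c)
      \<and> gen_lattice N (N - 1) (Lw c l w) =
          gen_lattice N (N - 1)
            (\<lambda>i k. (if k = 1 then - of_int (u (i + 1)) else 0)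
                  + (if k = i + 1 then 1 / c (i + 1) else 0)))
   \<and> (\<forall>i\<in>{1..N-1}. \<forall>j\<in>{1..N-1}.
        (\<lambda>w::nat. (1 / (real w)^2) * (\<Sum>k=1..N. Lw c l w i k * Lw c l w j k))
          \<longlonglongrightarrow> (\<Sum>k=1..N-1. l i k * l j k))"
  proof (intro conjI allI ballI)
  fix w :: nat
  define u where "u = uu (mm c l w)"
  have urec: "\<forall>i\<in>{1..N-1}. u (i+1) = - (mm c l w i 1 + (\<Sum>j=2..i. mm c l w i j * u j))"
    unfolding u_def using uu_rec by blast
  have e1: "gen_lattice N (N - 1) (Lw c l w) = gen_lattice N (N-1) (Rr u c)"
    by (rule latA[OF N2 c1 urec])
  have e2: "gen_lattice N (N-1) (Rr u c) = dual N (proj_perp N (uhat N c u) ` Lambda_c N c)"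
    using latB1[OF N2 c_pos] latB2[OF N2 c_pos c1] by simp
  show "\<exists>u::nat \<Rightarrow> int.
        gen_lattice N (N - 1) (Lw c l w) =
          dual N (proj_perp N (uhat N c u) ` Lambda_c N c)
      \<and> gen_lattice N (N - 1) (Lw c l w) =
          gen_lattice N (N - 1)
            (\<lambda>i k. (if k = 1 then - of_int (u (i + 1)) else 0)
                  + (if k = i + 1 then 1 / c (i + 1) else 0))"
    by (rule exI[of _ u]) (use e1 e2 in \<open>simp add: Rr_def\<close>)
next
  fix i j assume i: "i \<in> {1..N-1}" and j: "j \<in> {1..N-1}"
  show "(\<lambda>w::nat. (1 / (real w)^2) * (\<Sum>k=1..N. Lw c l w i k * Lw c l w j k))
          \<longlonglongrightarrow> (\<Sum>k=1..N-1. l i k * l j k)"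
    by (rule partii[OF N2 c_pos c1 L_lower i j])
qed

end
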